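(* Let $n(k_1,k_2,k_3)=(e^{ik_1}-1)(e^{ik_2}-1)(e^{ik_3}-1)+\overline{(e^{ik_1}-1)(e^{ik_2}-1)(e^{ik_3}-1)}$. There exists $C>0$ such that for all $k_1,k_2,k_3\in(-\pi,\pi]$, with $k=k_1+k_2+k_3$, we have $|n(k_1,k_2,k_3)|\le C|k|$. *)

theory Defs
  imports Complex_Main
begin

definition nfun :: "real \<Rightarrow> real \<Rightarrow> real \<Rightarrow> complex" where
  "nfun k1 k2 k3 =
     (let p = (exp (\<i> * of_real k1) - 1) * (exp (\<i> * of_real k2) - 1) * (exp (\<i> * of_real k3) - 1)
      in p + cnj p)"

end

theory Submission
  imports Defs
begin

lemma half_fac: "exp (\<i> * complex_of_real a) - 1 = exp (\<i> * complex_of_real (a/2)) * (2 * \<i> * complex_of_real (sin (a/2)))"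
proof -
  have "exp (\<i> * complex_of_real a) = exp (\<i> * complex_of_real (a/2)) * exp (\<i> * complex_of_real (a/2))"
    by (simp flip: exp_add add: distrib_left[symmetric])
  moreover have "exp (\<i> * complex_of_real (a/2)) * exp (- (\<i> * complex_of_real (a/2))) = 1"
    by (simp flip: exp_add)
  moreover have "2 * \<i> * complex_of_real (sin (a/2)) = exp (\<i> * complex_of_real (a/2)) - exp (- (\<i> * complex_of_real (a/2)))"
    by (simp add: complex_eq_iff exp_eq_polar cis.sel cos_of_real sin_of_real)
  ultimately show ?thesis
    by (metis (no_types, lifting) add_diff_cancel_left' diff_diff_eq2 mult.commute right_diff_distrib' mult_1_right)
qed

lemma nfun_eq: "nfun a b c = complex_of_real (16 * sin (a/2) * sin (b/2) * sin (c/2) * sin ((a+b+c)/2))"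
proof -
  let ?e = "exp (\<i> * complex_of_real ((a+b+c)/2))"
  have e: "exp (\<i> * complex_of_real (a/2)) * exp (\<i> * complex_of_real (b/2)) * exp (\<i> * complex_of_real (c/2)) = ?e"
    by (simp flip: exp_add add: algebra_simps add_divide_distrib)
  have p: "(exp (\<i> * of_real a) - 1) * (exp (\<i> * of_real b) - 1) * (exp (\<i> * of_real c) - 1)
     = ?e * (- 8 * \<i> * complex_of_real (sin (a/2) * sin (b/2) * sin (c/2)))"
    unfolding half_fac e[symmetric] by (simp add: algebra_simps)
  have ee: "?e = complex_of_real (cos ((a+b+c)/2)) + \<i> * complex_of_real (sin ((a+b+c)/2))"
    by (simp add: exp_eq_polar cis.ctr Complex_eq)
  show ?thesis unfolding nfun_def Let_def p ee
    by (simp add: complex_eq_iff)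
qed

theorem mainTheorem3:
  shows "\<exists>C>0. \<forall>k1 k2 k3 :: real.
           k1 \<in> {-pi<..pi} \<longrightarrow> k2 \<in> {-pi<..pi} \<longrightarrow> k3 \<in> {-pi<..pi} \<longrightarrow>
           cmod (nfun k1 k2 k3) \<le> C * \<bar>k1 + k2 + k3\<bar>"
proof (intro exI[of _ 8] conjI allI impI)
  fix a b c :: real
  have "cmod (nfun a b c) = 16 * \<bar>sin (a/2)\<bar> * \<bar>sin (b/2)\<bar> * \<bar>sin (c/2)\<bar> * \<bar>sin ((a+b+c)/2)\<bar>"
    unfolding nfun_eq norm_of_real by (simp add: abs_mult)
  also have "\<dots> \<le> 16 * 1 * 1 * 1 * \<bar>(a+b+c)/2\<bar>"
    by (intro mult_mono abs_sin_le_one abs_sin_x_le_abs_x) auto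
  also have "\<dots> = 8 * \<bar>a+b+c\<bar>" by simp
  finally show "cmod (nfun a b c) \<le> 8 * \<bar>a+b+c\<bar>" .
qed simp

end
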